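(* For $0\le k\le n$, $$\alpha_{H_n^k}\cong \omega_{n,k}\big\uparrow^{S_n\times S_n}_{(S_k\times S_{n-k})\times(S_k\times S_{n-k})}.$$
   Context: Permutations are composed as functions, and $\pi\in S_n$ is identified with the permutation matrix whose $(i,j)$ entry is $1$ iff $i=\pi(j)$. $U_{n,k}$ is the $n\times n$ $(0,1)$-matrix whose upper left $k\times k$ block is upper triangular with all entries on and above the diagonal equal to $1$, whose upper right $k\times(n-k)$ block has all entries $1$, whose lower left block is zero and whose lower right block is $I_{n-k}$. $H_n^k=\{\pi U_{n,k}\sigma\mid\pi,\sigma\in S_n\}$, and $\alpha_{H_n^k}$ is the complex permutation representation of $S_n\times S_n$ on the space with basis $H_n^k$ given by $(\pi,\sigma)\bullet A=\pi A\sigma^{-1}$. $S_k\times S_{n-k}\le S_n$ is the subgroup of permutations preserving $\{1,\dots,k\}$ (and hence $\{k+1,\dots,n\}$). $W_n^k=\{\pi U_{n,k}\sigma\mid \pi,\sigma\in S_k\times S_{n-k}\}$ is the orbit of $U_{n,k}$ under the restricted action of $(S_k\times S_{n-k})\times(S_k\times S_{n-k})$, and $\omega_{n,k}$ is the corresponding permutation representation of $(S_k\times S_{n-k})\times(S_k\times S_{n-k})$ on the space with basis $W_n^k$. *)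

theory Defs
  imports "Jordan_Normal_Form.Matrix" "HOL-Algebra.Sym_Groups"
begin

definition rep_iso :: "('g, 'b) monoid_scheme \<Rightarrow> ('g \<Rightarrow> complex mat) \<Rightarrow> ('g \<Rightarrow> complex mat) \<Rightarrow> bool" where
  "rep_iso G \<rho> \<sigma> = (\<exists>d P. P \<in> carrier_mat d d \<and> invertible_mat P \<and>
      (\<forall>g\<in>carrier G. \<rho> g \<in> carrier_mat d d \<and> \<sigma> g \<in> carrier_mat d d \<and> \<rho> g * P = P * \<sigma> g))"

definition enum_of :: "'a set \<Rightarrow> 'a list" where
  "enum_of X = (SOME xs. distinct xs \<and> set xs = X)"

definition perm_rep :: "('g \<Rightarrow> 'a \<Rightarrow> 'a) \<Rightarrow> 'a set \<Rightarrow> 'g \<Rightarrow> complex mat" where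
  "perm_rep act X g = (let xs = enum_of X in
     mat (length xs) (length xs) (\<lambda>(i, j). if xs ! i = act g (xs ! j) then 1 else 0))"

definition coset_reps :: "('g, 'b) monoid_scheme \<Rightarrow> 'g set \<Rightarrow> 'g list" where
  "coset_reps G H = (SOME ts. set ts \<subseteq> carrier G \<and>
      (\<forall>g\<in>carrier G. \<exists>!i. i < length ts \<and> inv\<^bsub>G\<^esub> (ts ! i) \<otimes>\<^bsub>G\<^esub> g \<in> H))"

definition induced_rep :: "('g, 'b) monoid_scheme \<Rightarrow> 'g set \<Rightarrow> ('g \<Rightarrow> complex mat) \<Rightarrow> 'g \<Rightarrow> complex mat" where
  "induced_rep G H \<rho> g = (let ts = coset_reps G H; m = length ts; d = dim_row (\<rho> \<one>\<^bsub>G\<^esub>) in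
     mat (m * d) (m * d) (\<lambda>(r, c).
       let i = r div d; a = r mod d; j = c div d; b = c mod d;
           h = inv\<^bsub>G\<^esub> (ts ! i) \<otimes>\<^bsub>G\<^esub> g \<otimes>\<^bsub>G\<^esub> (ts ! j)
       in if h \<in> H then \<rho> h $$ (a, b) else 0))"

text \<open>Permutation matrix of \<pi>: (i,j) entry 1 iff i = \<pi>(j), with rows/columns 1..n
  stored at positions 0..n-1.\<close>
definition perm_mat :: "nat \<Rightarrow> (nat \<Rightarrow> nat) \<Rightarrow> int mat" where
  "perm_mat n \<pi> = mat n n (\<lambda>(i, j). if i + 1 = \<pi> (j + 1) then 1 else 0)"

definition U_mat :: "nat \<Rightarrow> nat \<Rightarrow> int mat" where
  "U_mat n k = mat n n (\<lambda>(i, j).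
     if i < k \<and> j < k then (if i \<le> j then 1 else 0)
     else if i < k then 1
     else if j < k then 0
     else (if i = j then 1 else 0))"

definition SnSn :: "nat \<Rightarrow> ((nat \<Rightarrow> nat) \<times> (nat \<Rightarrow> nat)) monoid" where
  "SnSn n = sym_group n \<times>\<times> sym_group n"

definition two_sided_act :: "nat \<Rightarrow> (nat \<Rightarrow> nat) \<times> (nat \<Rightarrow> nat) \<Rightarrow> int mat \<Rightarrow> int mat" where
  "two_sided_act n g A = perm_mat n (fst g) * A * perm_mat n (inv\<^bsub>sym_group n\<^esub> (snd g))"

definition H_set :: "nat \<Rightarrow> nat \<Rightarrow> int mat set" where
  "H_set n k = {perm_mat n \<pi> * U_mat n k * perm_mat n \<sigma> | \<pi> \<sigma>.
                  \<pi> \<in> carrier (sym_group n) \<and> \<sigma> \<in> carrier (sym_group n)}"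

text \<open>S_k x S_{n-k}: permutations of {1..n} preserving {1..k}.\<close>
definition young_sub :: "nat \<Rightarrow> nat \<Rightarrow> (nat \<Rightarrow> nat) set" where
  "young_sub n k = {p \<in> carrier (sym_group n). p ` {1..k} = {1..k}}"

definition W_set :: "nat \<Rightarrow> nat \<Rightarrow> int mat set" where
  "W_set n k = {perm_mat n \<pi> * U_mat n k * perm_mat n \<sigma> | \<pi> \<sigma>.
                  \<pi> \<in> young_sub n k \<and> \<sigma> \<in> young_sub n k}"

definition alpha_rep :: "nat \<Rightarrow> nat \<Rightarrow> (nat \<Rightarrow> nat) \<times> (nat \<Rightarrow> nat) \<Rightarrow> complex mat" where
  "alpha_rep n k = perm_rep (two_sided_act n) (H_set n k)"

definition omega_rep :: "nat \<Rightarrow> nat \<Rightarrow> (nat \<Rightarrow> nat) \<times> (nat \<Rightarrow> nat) \<Rightarrow> complex mat" where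
  "omega_rep n k = perm_rep (two_sided_act n) (W_set n k)"

end

theory Submission
  imports Defs
begin

lemma mult_entry:
  assumes "A \<in> carrier_mat n m" "B \<in> carrier_mat m p" "i < n" "j < p"
  shows "(A*B) $$ (i,j) = (\<Sum>l\<in>{0..<m}. A $$ (i,l) * B $$ (l,j))"
  using assms by (auto simp: scalar_prod_def intro!: sum.cong)

lemma sum_single:
  assumes "finite S" "\<And>l. l \<in> S \<Longrightarrow> l \<noteq> cc \<Longrightarrow> f l = 0"
  shows "sum f S = (if cc \<in> S then f cc else 0)"
proof -
  have "sum f S = (\<Sum>l\<in>S. if l = cc then f cc else 0)"
    using assms(2) by (intro sum.cong) auto
  thus ?thesis using assms(1) by simp
qed

lemma perm_conj_mat:
  fixes x y :: "nat \<Rightarrow> 'a" and f :: "'a \<Rightarrow> 'a"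
  assumes bx: "bij_betw x {0..<N} X" and "bij_betw y {0..<N} X" and fX: "f ` X \<subseteq> X"
  defines "A \<equiv> mat N N (\<lambda>(i,j). if x i = f (x j) then 1 else 0) :: complex mat"
      and "B \<equiv> mat N N (\<lambda>(i,j). if y i = f (y j) then 1 else 0) :: complex mat"
      and "P \<equiv> mat N N (\<lambda>(i,j). if x i = y j then 1 else 0) :: complex mat"
  shows "A * P = P * B" "invertible_mat P"
proof -
  have xinj: "\<And>i j. i < N \<Longrightarrow> j < N \<Longrightarrow> x i = x j \<longleftrightarrow> i = j"
    using bx unfolding bij_betw_def inj_on_def by auto
  have yinj: "\<And>i j. i < N \<Longrightarrow> j < N \<Longrightarrow> y i = y j \<longleftrightarrow> i = j"
    using assms(2) unfolding bij_betw_def inj_on_def by auto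
  have xsurj: "\<And>z. z \<in> X \<Longrightarrow> \<exists>i<N. x i = z"
    using bx unfolding bij_betw_def by (metis atLeastLessThan_iff imageE)
  have ysurj: "\<And>z. z \<in> X \<Longrightarrow> \<exists>i<N. y i = z"
    using assms(2) unfolding bij_betw_def by (metis atLeastLessThan_iff imageE)
  have xX: "\<And>i. i < N \<Longrightarrow> x i \<in> X" using bx unfolding bij_betw_def by auto
  have yX: "\<And>i. i < N \<Longrightarrow> y i \<in> X" using assms(2) unfolding bij_betw_def by auto
  show "A * P = P * B"
  proof (rule eq_matI)
    fix i r assume i: "i < dim_row (P * B)" and r: "r < dim_col (P * B)"
    hence i: "i < N" and r: "r < N" by (auto simp: P_def B_def)
    obtain j0 where j0: "j0 < N" "x j0 = y r" using xsurj yX r by blast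
    obtain s0 where s0: "s0 < N" "y s0 = x i" using ysurj xX i by blast
    have xj: "\<And>l. l < N \<Longrightarrow> x l = y r \<Longrightarrow> l = j0" using xinj j0 by metis
    have ys: "\<And>l. l < N \<Longrightarrow> y l = x i \<Longrightarrow> l = s0" using yinj s0 by metis
    have "(A * P) $$ (i,r) = (\<Sum>l\<in>{0..<N}. A $$ (i,l) * P $$ (l,r))"
      by (rule mult_entry[OF _ _ i r]) (auto simp: A_def P_def)
    also have "\<dots> = (if x i = f (y r) then 1 else 0)"
      by (subst sum_single[where cc=j0]) (use j0 i r in \<open>auto simp: A_def P_def dest: xj\<close>)
    also have "\<dots> = (\<Sum>l\<in>{0..<N}. P $$ (i,l) * B $$ (l,r))"
      by (subst sum_single[where cc=s0]) (use s0 i r in \<open>auto simp: B_def P_def dest: ys\<close>)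
    also have "\<dots> = (P * B) $$ (i,r)"
      by (rule mult_entry[OF _ _ i r, symmetric]) (auto simp: B_def P_def)
    finally show "(A * P) $$ (i,r) = (P * B) $$ (i,r)" .
  qed (auto simp: A_def B_def P_def)
  define Q where "Q \<equiv> mat N N (\<lambda>(i,j). if y i = x j then 1 else 0) :: complex mat"
  have PQ: "P * Q = 1\<^sub>m N"
  proof (rule eq_matI)
    fix i r assume i: "i < dim_row (1\<^sub>m N)" and r: "r < dim_col (1\<^sub>m N)"
    hence i: "i < N" and r: "r < N" by auto
    obtain s0 where s0: "s0 < N" "y s0 = x i" using ysurj xX i by blast
    have ys: "\<And>l. l < N \<Longrightarrow> y l = x i \<Longrightarrow> l = s0" using yinj s0 by metis
    have "(P * Q) $$ (i,r) = (\<Sum>l\<in>{0..<N}. P $$ (i,l) * Q $$ (l,r))"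
      by (rule mult_entry[OF _ _ i r]) (auto simp: Q_def P_def)
    also have "\<dots> = (if x i = x r then 1 else 0)"
      by (subst sum_single[where cc=s0]) (use s0 i r in \<open>auto simp: Q_def P_def dest: ys\<close>)
    finally show "(P * Q) $$ (i,r) = 1\<^sub>m N $$ (i,r)" using i r xinj by auto
  qed (auto simp: Q_def P_def)
  have QP: "Q * P = 1\<^sub>m N"
  proof (rule eq_matI)
    fix i r assume i: "i < dim_row (1\<^sub>m N)" and r: "r < dim_col (1\<^sub>m N)"
    hence i: "i < N" and r: "r < N" by auto
    obtain s0 where s0: "s0 < N" "x s0 = y i" using xsurj yX i by blast
    have xs: "\<And>l. l < N \<Longrightarrow> x l = y i \<Longrightarrow> l = s0" using xinj s0 by metis
    have "(Q * P) $$ (i,r) = (\<Sum>l\<in>{0..<N}. Q $$ (i,l) * P $$ (l,r))"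
      by (rule mult_entry[OF _ _ i r]) (auto simp: Q_def P_def)
    also have "\<dots> = (if y i = y r then 1 else 0)"
      by (subst sum_single[where cc=s0]) (use s0 i r in \<open>auto simp: Q_def P_def dest: xs\<close>)
    finally show "(Q * P) $$ (i,r) = 1\<^sub>m N $$ (i,r)" using i r yinj by auto
  qed (auto simp: Q_def P_def)
  have dims: "dim_row P = N" "dim_col P = N" "dim_row Q = N" by (simp_all add: P_def Q_def)
  show "invertible_mat P" unfolding invertible_mat_def inverts_mat_def square_mat.simps
    by (rule conjI, simp add: dims, rule exI[of _ Q]) (simp add: PQ QP dims)
qed

lemma enum_of_props:
  assumes "finite X" shows "distinct (enum_of X)" "set (enum_of X) = X"
proof -
  have "\<exists>xs. distinct xs \<and> set xs = X" using finite_distinct_list[OF assms] by blast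
  hence "distinct (enum_of X) \<and> set (enum_of X) = X" unfolding enum_of_def by (rule someI_ex)
  thus "distinct (enum_of X)" "set (enum_of X) = X" by auto
qed

lemma length_enum_of: "finite X \<Longrightarrow> length (enum_of X) = card X"
  using enum_of_props distinct_card by metis

lemma perm_rep_entry:
  assumes "finite X" "i < card X" "j < card X"
  shows "perm_rep act X g $$ (i,j) = (if enum_of X ! i = act g (enum_of X ! j) then 1 else 0)"
    "perm_rep act X g \<in> carrier_mat (card X) (card X)"
  using assms length_enum_of[OF assms(1)] by (auto simp: perm_rep_def Let_def)

lemma perm_rep_eq:
  assumes "finite X"
  shows "perm_rep act X g = mat (card X) (card X) (\<lambda>(i,j). if enum_of X ! i = act g (enum_of X ! j) then 1 else 0)"
  using assms length_enum_of[OF assms(1)] by (auto simp: perm_rep_def Let_def)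

context group begin

lemma rel_trans:
  assumes "subgroup H G" "x \<in> carrier G" "y \<in> carrier G" "z \<in> carrier G"
    "inv x \<otimes> y \<in> H" "inv y \<otimes> z \<in> H"
  shows "inv x \<otimes> z \<in> H"
proof -
  have "inv x \<otimes> z = (inv x \<otimes> y) \<otimes> (inv y \<otimes> z)"
    using assms by (simp add: m_assoc[symmetric]) (simp add: m_assoc r_inv)
  thus ?thesis using assms subgroup.m_closed by metis
qed

lemma rel_sym:
  assumes "subgroup H G" "x \<in> carrier G" "y \<in> carrier G" "inv x \<otimes> y \<in> H"
  shows "inv y \<otimes> x \<in> H"
proof -
  have "inv (inv x \<otimes> y) = inv y \<otimes> x" using assms by (simp add: inv_mult_group)
  thus ?thesis using assms subgroup.m_inv_closed by metis
qed

lemma coset_reps_exist: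
  assumes "subgroup H G" "finite (carrier G)"
  shows "\<exists>ts. set ts \<subseteq> carrier G \<and>
      (\<forall>g\<in>carrier G. \<exists>!i. i < length ts \<and> inv (ts ! i) \<otimes> g \<in> H)"
proof -
  define cl where "cl g = {t \<in> carrier G. inv t \<otimes> g \<in> H}" for g
  define rep where "rep g = (SOME t. t \<in> cl g)" for g
  have Hsub: "H \<subseteq> carrier G" using assms subgroup.subset by blast
  have one: "\<one> \<in> H" using assms subgroup.one_closed by blast
  have repcl: "rep g \<in> cl g" if "g \<in> carrier G" for g
  proof -
    have "g \<in> cl g" using that one by (simp add: cl_def)
    thus ?thesis unfolding rep_def by (rule someI)
  qed
  have cleq: "cl g = cl g'" if "g \<in> carrier G" "g' \<in> carrier G" "inv g \<otimes> g' \<in> H" for g g'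
    using that rel_trans[OF assms(1)] rel_sym[OF assms(1)] unfolding cl_def by blast
  define ts where "ts = enum_of (rep ` carrier G)"
  have fin: "finite (rep ` carrier G)" using assms by simp
  note ep = enum_of_props[OF fin]
  have repc: "rep g \<in> carrier G" if "g \<in> carrier G" for g using repcl[OF that] by (auto simp: cl_def)
  show ?thesis
  proof (rule exI[of _ ts], intro conjI ballI)
    show "set ts \<subseteq> carrier G" using ep repc by (auto simp: ts_def)
  next
    fix g assume g: "g \<in> carrier G"
    obtain i where i: "i < length ts" "ts ! i = rep g"
      using ep g by (metis imageI in_set_conv_nth ts_def)
    have ex: "inv (ts ! i) \<otimes> g \<in> H" using repcl[OF g] i by (simp add: cl_def)
    show "\<exists>!i. i < length ts \<and> inv (ts ! i) \<otimes> g \<in> H"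
    proof (rule ex1I[of _ i])
      show "i < length ts \<and> inv (ts ! i) \<otimes> g \<in> H" using i ex by simp
    next
      fix j assume j: "j < length ts \<and> inv (ts ! j) \<otimes> g \<in> H"
      obtain g1 where g1: "g1 \<in> carrier G" "ts ! j = rep g1"
        using ep j by (metis imageE nth_mem ts_def)
      have "inv (ts ! j) \<otimes> g1 \<in> H" using repcl[OF g1(1)] g1 by (simp add: cl_def)
      hence "inv g1 \<otimes> g \<in> H"
        using rel_trans[OF assms(1)] rel_sym[OF assms(1)] j g g1 repc by metis
      hence "cl g1 = cl g" using cleq g g1 by blast
      hence "ts ! j = ts ! i" using g1 i by (simp add: rep_def)
      thus "j = i" using ep(1) i j nth_eq_iff_index_eq unfolding ts_def by metis
    qed
  qed
qed

end

lemma (in group) cancel1: "x \<in> carrier G \<Longrightarrow> y \<in> carrier G \<Longrightarrow> x \<otimes> (inv x \<otimes> y) = y"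
  by (simp add: m_assoc[symmetric])
lemma (in group) cancel2: "x \<in> carrier G \<Longrightarrow> y \<in> carrier G \<Longrightarrow> inv x \<otimes> (x \<otimes> y) = y"
  by (simp add: m_assoc[symmetric])

lemma induced_perm_iso:
  assumes grp: "group G" and fin: "finite (carrier G)" and sub: "subgroup H G"
  and act_one: "\<And>x. x \<in> Y \<Longrightarrow> act \<one>\<^bsub>G\<^esub> x = x"
  and act_mult: "\<And>g h x. g \<in> carrier G \<Longrightarrow> h \<in> carrier G \<Longrightarrow> x \<in> Y \<Longrightarrow>
        act (g \<otimes>\<^bsub>G\<^esub> h) x = act g (act h x)"
  and act_cl: "\<And>g x. g \<in> carrier G \<Longrightarrow> x \<in> Y \<Longrightarrow> act g x \<in> Y"
  and u: "u \<in> Y"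
  and stab: "\<And>g. g \<in> carrier G \<Longrightarrow> act g u = u \<Longrightarrow> g \<in> H"
  and X: "X = (\<lambda>g. act g u) ` carrier G" and W: "W = (\<lambda>g. act g u) ` H"
  shows "rep_iso G (perm_rep act X) (induced_rep G H (perm_rep act W))"
proof -
  interpret G: group G by fact
  have Hsub: "H \<subseteq> carrier G" using sub subgroup.subset by blast
  have one: "\<one>\<^bsub>G\<^esub> \<in> H" using sub subgroup.one_closed by blast
  have XY: "X \<subseteq> Y" using X act_cl u by auto
  have WX: "W \<subseteq> X" using X W Hsub by auto
  have finX: "finite X" using X fin by simp
  have finW: "finite W" using finX WX finite_subset by blast
  have act_inv: "act (inv\<^bsub>G\<^esub> g) (act g x) = x" if "g \<in> carrier G" "x \<in> Y" for g x
    using act_mult[of "inv\<^bsub>G\<^esub> g" g x] that act_one by simp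
  have actX: "act g x \<in> X" if "g \<in> carrier G" and xX: "x \<in> X" for g x
  proof -
    obtain g' where g': "g' \<in> carrier G" "x = act g' u" using xX X by auto
    hence "act g x = act (g \<otimes>\<^bsub>G\<^esub> g') u" using act_mult that u by simp
    thus ?thesis using X g' that by auto
  qed
  have actW: "act h w \<in> W" if "h \<in> H" and wW: "w \<in> W" for h w
  proof -
    obtain g' where g': "g' \<in> H" "w = act g' u" using wW W by auto
    moreover have "h \<in> carrier G" "g' \<in> carrier G" using Hsub g' that(1) by auto
    ultimately have "act h w = act (h \<otimes>\<^bsub>G\<^esub> g') u" using act_mult[of h g' u] u by simp
    thus ?thesis using W g' that sub subgroup.m_closed by fastforce
  qed
  have key: "g \<in> H" if g: "g \<in> carrier G" and w: "w \<in> W" "w' \<in> W" and e: "act g w = w'" for g w w'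
  proof -
    obtain h where h: "h \<in> H" "w = act h u" using w W by auto
    obtain h' where h': "h' \<in> H" "w' = act h' u" using w W by auto
    have hc: "h \<in> carrier G" "h' \<in> carrier G" using h h' Hsub by auto
    define z where "z = inv\<^bsub>G\<^esub> h' \<otimes>\<^bsub>G\<^esub> (g \<otimes>\<^bsub>G\<^esub> h)"
    have zc: "z \<in> carrier G" using hc g by (simp add: z_def)
    have "act z u = act (inv\<^bsub>G\<^esub> h') (act g (act h u))"
      using act_mult hc g u act_cl by (simp add: z_def)
    also have "\<dots> = u" using e h h' act_inv hc u by simp
    finally have "z \<in> H" using stab zc by blast
    moreover have "g = h' \<otimes>\<^bsub>G\<^esub> z \<otimes>\<^bsub>G\<^esub> inv\<^bsub>G\<^esub> h"
      using hc g by (simp add: z_def G.cancel1 G.m_assoc)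
    ultimately show ?thesis using h h' sub
      by (metis subgroup.m_closed subgroup.m_inv_closed)
  qed
  define ts where "ts = coset_reps G H"
  have CR: "set ts \<subseteq> carrier G \<and> (\<forall>g\<in>carrier G. \<exists>!i. i < length ts \<and> inv\<^bsub>G\<^esub> (ts ! i) \<otimes>\<^bsub>G\<^esub> g \<in> H)"
    unfolding ts_def coset_reps_def by (rule someI_ex) (rule G.coset_reps_exist[OF sub fin])
  define m where "m = length ts"
  have tsc: "ts ! i \<in> carrier G" if "i < m" for i using CR that m_def nth_mem by blast
  have uniq: "i = j" if "i < m" "j < m" "g \<in> carrier G" "inv\<^bsub>G\<^esub> (ts ! i) \<otimes>\<^bsub>G\<^esub> g \<in> H"
      "inv\<^bsub>G\<^esub> (ts ! j) \<otimes>\<^bsub>G\<^esub> g \<in> H" for i j g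
    using CR that m_def by metis
  have exi: "\<exists>i<m. inv\<^bsub>G\<^esub> (ts ! i) \<otimes>\<^bsub>G\<^esub> g \<in> H" if "g \<in> carrier G" for g
    using CR that m_def by metis
  define ws where "ws = enum_of W"
  define d where "d = card W"
  have lws: "length ws = d" using length_enum_of[OF finW] by (simp add: ws_def d_def)
  note wsp = enum_of_props[OF finW, folded ws_def]
  have wsW: "ws ! a \<in> W" if "a < d" for a using wsp lws that nth_mem by blast
  have ws_inj: "a = b" if "a < d" "b < d" "ws ! a = ws ! b" for a b
    using wsp(1) lws that nth_eq_iff_index_eq by metis
  have ws_surj: "\<exists>a<d. ws ! a = w" if "w \<in> W" for w
    using wsp lws that by (metis in_set_conv_nth)
  define y where "y r = act (ts ! (r div d)) (ws ! (r mod d))" for r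
  have rng: "r div d < m" "r mod d < d" if "r < m * d" for r
    using that by (auto simp: less_mult_imp_div_less) (metis mod_less_divisor mult_0_right neq0_conv not_less0)
  have yX: "y r \<in> X" if "r < m * d" for r
    using actX[OF tsc[OF rng(1)[OF that]]] wsW[OF rng(2)[OF that]] WX y_def by auto
  have y_inj: "r = r'" if r: "r < m * d" "r' < m * d" and e: "y r = y r'" for r r'
  proof -
    let ?i = "r div d" and ?a = "r mod d" and ?i' = "r' div d" and ?a' = "r' mod d"
    have c: "ts ! ?i \<in> carrier G" "ts ! ?i' \<in> carrier G" using tsc rng r by auto
    have w: "ws ! ?a \<in> W" "ws ! ?a' \<in> W" using wsW rng r by auto
    hence w0: "ws ! ?a \<in> Y" "ws ! ?a' \<in> Y" using WX XY by auto
    have "act (inv\<^bsub>G\<^esub> (ts ! ?i') \<otimes>\<^bsub>G\<^esub> ts ! ?i) (ws ! ?a) = ws ! ?a'"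
      using e act_mult c w0 act_inv by (simp add: y_def)
    hence "inv\<^bsub>G\<^esub> (ts ! ?i') \<otimes>\<^bsub>G\<^esub> ts ! ?i \<in> H" using key c w by simp
    moreover have "inv\<^bsub>G\<^esub> (ts ! ?i) \<otimes>\<^bsub>G\<^esub> ts ! ?i \<in> H" using c one by simp
    ultimately have ii: "?i = ?i'" using uniq rng r c by blast
    hence "ws ! ?a = ws ! ?a'" using e act_inv[OF c(1)] w0 by (simp add: y_def) metis
    hence "?a = ?a'" using ws_inj rng r by blast
    thus ?thesis using ii by (metis div_mult_mod_eq)
  qed
  have y_surj: "\<exists>r<m*d. y r = x" if x: "x \<in> X" for x
  proof -
    obtain g where g: "g \<in> carrier G" "x = act g u" using x X by auto
    obtain i where i: "i < m" "inv\<^bsub>G\<^esub> (ts ! i) \<otimes>\<^bsub>G\<^esub> g \<in> H" using exi g by blast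
    define h where "h = inv\<^bsub>G\<^esub> (ts ! i) \<otimes>\<^bsub>G\<^esub> g"
    have hH: "h \<in> H" using i h_def by simp
    have "x = act (ts ! i \<otimes>\<^bsub>G\<^esub> h) u" using g tsc[OF i(1)] by (simp add: h_def G.cancel1)
    also have "\<dots> = act (ts ! i) (act h u)" using act_mult tsc[OF i(1)] hH Hsub u by auto
    finally have x2: "x = act (ts ! i) (act h u)" .
    have "act h u \<in> W" using W hH by auto
    then obtain a where a: "a < d" "ws ! a = act h u" using ws_surj by blast
    have dpos: "0 < d" using a by simp
    have "i * d + a < m * d"
    proof -
      have "i * d + a < (i + 1) * d" using a by simp
      also have "\<dots> \<le> m * d" using i(1) by (intro mult_right_mono) auto
      finally show ?thesis .
    qed
    moreover have "y (i * d + a) = x" using a x2 dpos by (simp add: y_def)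
    ultimately show ?thesis by blast
  qed
  have ybij: "bij_betw y {0..<m*d} X" unfolding bij_betw_def
  proof
    show "inj_on y {0..<m*d}" unfolding inj_on_def using y_inj by auto
    show "y ` {0..<m*d} = X"
    proof
      show "y ` {0..<m*d} \<subseteq> X" using yX by auto
      show "X \<subseteq> y ` {0..<m*d}"
      proof
        fix x assume "x \<in> X"
        then obtain r where "r < m*d" "y r = x" using y_surj by blast
        thus "x \<in> y ` {0..<m*d}" by auto
      qed
    qed
  qed
  have cardX: "card X = m * d" using bij_betw_same_card[OF ybij] by simp
  define N where "N = m * d"
  define xs where "xs = enum_of X"
  note xsp = enum_of_props[OF finX, folded xs_def]
  have xbij: "bij_betw ((!) xs) {0..<N} X"
    using bij_betw_nth[OF xsp(1)] xsp(2) length_enum_of[OF finX] cardX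
    by (metis N_def atLeast0LessThan xs_def)
  have ybij': "bij_betw y {0..<N} X" using ybij N_def by simp
  have ind: "induced_rep G H (perm_rep act W) g = mat N N (\<lambda>(r,c). if y r = act g (y c) then 1 else 0)"
    if g: "g \<in> carrier G" for g
  proof -
    have dr: "dim_row (perm_rep act W \<one>\<^bsub>G\<^esub>) = d" unfolding perm_rep_eq[OF finW] d_def by simp
    have entry: "(if inv\<^bsub>G\<^esub> (ts ! (r div d)) \<otimes>\<^bsub>G\<^esub> g \<otimes>\<^bsub>G\<^esub> ts ! (c div d) \<in> H
       then perm_rep act W (inv\<^bsub>G\<^esub> (ts ! (r div d)) \<otimes>\<^bsub>G\<^esub> g \<otimes>\<^bsub>G\<^esub> ts ! (c div d)) $$ (r mod d, c mod d) else 0)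
       = (if y r = act g (y c) then 1 else 0)" if r: "r < N" "c < N" for r c
    proof -
      define i where "i = r div d"
      define a where "a = r mod d"
      define j where "j = c div d"
      define b where "b = c mod d"
      define h where "h = inv\<^bsub>G\<^esub> (ts ! i) \<otimes>\<^bsub>G\<^esub> g \<otimes>\<^bsub>G\<^esub> ts ! j"
      have ij: "i < m" "j < m" "a < d" "b < d" using rng r N_def i_def j_def a_def b_def by auto
      have c: "ts ! i \<in> carrier G" "ts ! j \<in> carrier G" using tsc ij by auto
      have w: "ws ! a \<in> W" "ws ! b \<in> W" using wsW ij by auto
      hence w0: "ws ! a \<in> Y" "ws ! b \<in> Y" using WX XY by auto
      have hc: "h \<in> carrier G" using c g by (simp add: h_def)
      have yr: "y r = act (ts ! i) (ws ! a)" by (simp add: y_def i_def a_def)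
      have yc: "act g (y c) = act (g \<otimes>\<^bsub>G\<^esub> ts ! j) (ws ! b)"
        using act_mult c g w0 by (simp add: y_def j_def b_def)
      have hh: "ts ! i \<otimes>\<^bsub>G\<^esub> h = g \<otimes>\<^bsub>G\<^esub> ts ! j"
        using c g by (simp add: h_def G.m_assoc G.cancel1)
      have equiv: "y r = act g (y c) \<longleftrightarrow> ws ! a = act h (ws ! b)"
      proof
        assume e: "y r = act g (y c)"
        have "act h (ws ! b) = act (inv\<^bsub>G\<^esub> (ts ! i)) (act (g \<otimes>\<^bsub>G\<^esub> ts ! j) (ws ! b))"
          using act_mult c g w0 hc by (simp add: h_def G.m_assoc)
        also have "\<dots> = act (inv\<^bsub>G\<^esub> (ts ! i)) (act (ts ! i) (ws ! a))" using e yr yc by simp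
        also have "\<dots> = ws ! a" using act_inv c w0 by simp
        finally show "ws ! a = act h (ws ! b)" by simp
      next
        assume e: "ws ! a = act h (ws ! b)"
        have "y r = act (ts ! i \<otimes>\<^bsub>G\<^esub> h) (ws ! b)" using yr e act_mult c hc w0 by simp
        thus "y r = act g (y c)" using hh yc by simp
      qed
      show ?thesis
      proof (cases "h \<in> H")
        case True
        have "perm_rep act W h $$ (a, b) = (if ws ! a = act h (ws ! b) then 1 else 0)"
          unfolding ws_def by (rule perm_rep_entry(1)[OF finW]) (use ij in \<open>simp_all add: d_def\<close>)
        thus ?thesis using True equiv by (simp add: h_def i_def j_def a_def b_def)
      next
        case False
        have "\<not> (y r = act g (y c))" using equiv key[OF hc w(2) w(1)] False by metis
        thus ?thesis using False by (simp add: h_def i_def j_def a_def b_def)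
      qed
    qed
    show ?thesis
      unfolding induced_rep_def Let_def dr ts_def[symmetric] m_def[symmetric] N_def[symmetric]
      by (rule eq_matI) (auto simp: entry)
  qed
  have perm: "perm_rep act X g = mat N N (\<lambda>(i,j). if xs ! i = act g (xs ! j) then 1 else 0)" for g
    using perm_rep_eq[OF finX] cardX by (simp add: N_def xs_def)
  define P :: "complex mat" where "P = mat N N (\<lambda>(i,j). if xs ! i = y j then 1 else 0)"
  show ?thesis unfolding rep_iso_def
  proof (intro exI[of _ N] exI[of _ P] conjI ballI)
    show "P \<in> carrier_mat N N" by (simp add: P_def)
    show "invertible_mat P" unfolding P_def
      by (rule perm_conj_mat(2)[OF xbij ybij', of id]) simp
  next
    fix g assume g: "g \<in> carrier G"
    show "perm_rep act X g \<in> carrier_mat N N" by (simp add: perm)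
    show "induced_rep G H (perm_rep act W) g \<in> carrier_mat N N" by (simp add: ind[OF g])
    show "perm_rep act X g * P = P * induced_rep G H (perm_rep act W) g"
      unfolding perm ind[OF g] P_def
      by (rule perm_conj_mat(1)[OF xbij ybij']) (use actX g in auto)
  qed
qed

lemma perm_mat_carrier[simp]: "perm_mat n p \<in> carrier_mat n n"
  by (simp add: perm_mat_def)

lemma perm_mat_mult:
  assumes p: "p permutes {1..n}" and q: "q permutes {1..n}"
  shows "perm_mat n p * perm_mat n q = perm_mat n (p \<circ> q)"
proof (rule eq_matI)
  fix i j assume "i < dim_row (perm_mat n (p \<circ> q))" "j < dim_col (perm_mat n (p \<circ> q))"
  hence i: "i < n" and j: "j < n" by (auto simp: perm_mat_def)
  have qj: "q (j+1) \<in> {1..n}" using permutes_in_image[OF q] j by simp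
  have "(perm_mat n p * perm_mat n q) $$ (i,j) =
     (\<Sum>l\<in>{0..<n}. perm_mat n p $$ (i,l) * perm_mat n q $$ (l,j))"
    by (rule mult_entry[OF _ _ i j]) auto
  also have "\<dots> = (if i + 1 = p (q (j+1)) then 1 else 0)"
    by (subst sum_single[where cc="q (j+1) - 1"]) (use i j qj in \<open>auto simp: perm_mat_def\<close>)
  also have "\<dots> = perm_mat n (p \<circ> q) $$ (i,j)" using i j by (simp add: perm_mat_def)
  finally show "(perm_mat n p * perm_mat n q) $$ (i,j) = perm_mat n (p \<circ> q) $$ (i,j)" .
qed (auto simp: perm_mat_def)

lemma perm_mat_id: "perm_mat n id = 1\<^sub>m n"
  by (rule eq_matI) (auto simp: perm_mat_def)

lemma perm_mat_entry:
  assumes A: "A \<in> carrier_mat n n" and p: "p permutes {1..n}" and q: "q permutes {1..n}"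
    and a: "a \<in> {1..n}" and b: "b \<in> {1..n}"
  shows "(perm_mat n p * A * perm_mat n q) $$ (p a - 1, b - 1) = A $$ (a - 1, q b - 1)"
proof -
  have pa: "p a \<in> {1..n}" using permutes_in_image[OF p] a by simp
  have qb: "q b \<in> {1..n}" using permutes_in_image[OF q] b by simp
  have pinj: "t = a - 1" if "t < n" "p a = p (Suc t)" for t
  proof -
    have "a = Suc t" using permutes_inj[OF p] that(2) by (meson injD)
    thus ?thesis by simp
  qed
  have pm: "perm_mat n p $$ (p a - 1, t) = (if t = a - 1 then 1 else 0)" if "t < n" for t
  proof -
    have "perm_mat n p $$ (p a - 1, t) = (if p a = p (Suc t) then 1 else 0)"
    proof -
      have "p a - 1 < n" "Suc (p a - 1) = p a" using pa by auto
      thus ?thesis using that unfolding perm_mat_def by (subst index_mat) auto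
    qed
    also have "\<dots> = (if t = a - 1 then 1 else 0)"
    proof (cases "t = a - 1")
      case True
      hence "Suc t = a" using a by auto
      thus ?thesis using True by simp
    next
      case False
      hence "p a \<noteq> p (Suc t)" using pinj[OF that] by blast
      thus ?thesis using False by simp
    qed
    finally show ?thesis .
  qed
  have qm: "perm_mat n q $$ (l, b - 1) = (if l = q b - 1 then 1 else 0)" if "l < n" for l
    using that b qb by (auto simp: perm_mat_def)
  have PA: "(perm_mat n p * A) $$ (p a - 1, l) = A $$ (a - 1, l)" if l: "l < n" for l
  proof -
    have "(perm_mat n p * A) $$ (p a - 1, l) = (\<Sum>t\<in>{0..<n}. perm_mat n p $$ (p a - 1, t) * A $$ (t, l))"
      by (rule mult_entry[of _ n n]) (use pa A l in auto)
    also have "\<dots> = (\<Sum>t\<in>{0..<n}. if t = a - 1 then A $$ (a - 1, l) else 0)"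
      by (rule sum.cong[OF refl], subst pm, auto)
    also have "\<dots> = A $$ (a - 1, l)" using a by auto
    finally show ?thesis .
  qed
  have PAc: "perm_mat n p * A \<in> carrier_mat n n" using A by (metis mult_carrier_mat perm_mat_carrier)
  have "(perm_mat n p * A * perm_mat n q) $$ (p a - 1, b - 1) =
     (\<Sum>l\<in>{0..<n}. (perm_mat n p * A) $$ (p a - 1, l) * perm_mat n q $$ (l, b - 1))"
    by (rule mult_entry[of _ n n _ n]) (use pa b PAc in auto)
  also have "\<dots> = (\<Sum>l\<in>{0..<n}. if l = q b - 1 then (perm_mat n p * A) $$ (p a - 1, q b - 1) else 0)"
    by (rule sum.cong[OF refl], subst qm, auto)
  also have "\<dots> = (perm_mat n p * A) $$ (p a - 1, q b - 1)" using qb by auto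
  also have "\<dots> = A $$ (a - 1, q b - 1)"
  proof -
    have "q b - 1 < n" using qb by auto
    thus ?thesis by (rule PA)
  qed
  finally show ?thesis .
qed

lemma U_carrier[simp]: "U_mat n k \<in> carrier_mat n n" by (simp add: U_mat_def)

lemma U_val:
  assumes "a \<in> {1..n}" "b \<in> {1..n}"
  shows "U_mat n k $$ (a - 1, b - 1) = (if a \<le> k \<and> b \<le> k then (if a \<le> b then 1 else 0)
     else if a \<le> k then 1 else if b \<le> k then 0 else if a = b then 1 else 0)"
proof -
  have "a - 1 < n" "b - 1 < n" using assms by auto
  moreover have "a - 1 < k \<longleftrightarrow> a \<le> k" "b - 1 < k \<longleftrightarrow> b \<le> k" "a - 1 \<le> b - 1 \<longleftrightarrow> a \<le> b"
    "a - 1 = b - 1 \<longleftrightarrow> a = b" using assms by auto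
  ultimately show ?thesis unfolding U_mat_def by (subst index_mat) (simp_all only: split_conv)
qed

lemma permutes_image_subset_eq:
  assumes p: "p permutes S" and fin: "finite A" and sub: "p ` A \<subseteq> A"
  shows "p ` A = A"
proof -
  have "inj_on p A" using permutes_inj[OF p] inj_on_subset by blast
  hence "card (p ` A) = card A" by (rule card_image)
  thus ?thesis using card_subset_eq[OF fin sub] by simp
qed

lemma stab_young:
  assumes k: "k \<le> n" and p: "\<pi> permutes {1..n}" and s: "\<sigma> permutes {1..n}"
    and e: "perm_mat n \<pi> * U_mat n k * perm_mat n (inv' \<sigma>) = U_mat n k"
  shows "\<pi> \<in> young_sub n k \<and> \<sigma> \<in> young_sub n k"
proof -
  have si: "inv' \<sigma> permutes {1..n}" using permutes_inv[OF s] .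
  have rel: "U_mat n k $$ (\<pi> a - 1, \<sigma> b - 1) = U_mat n k $$ (a - 1, b - 1)"
    if a: "a \<in> {1..n}" and b: "b \<in> {1..n}" for a b
  proof -
    have sb: "\<sigma> b \<in> {1..n}" using permutes_in_image[OF s] b by simp
    have "U_mat n k $$ (\<pi> a - 1, \<sigma> b - 1) =
       (perm_mat n \<pi> * U_mat n k * perm_mat n (inv' \<sigma>)) $$ (\<pi> a - 1, \<sigma> b - 1)" using e by simp
    also have "\<dots> = U_mat n k $$ (a - 1, inv' \<sigma> (\<sigma> b) - 1)"
      by (rule perm_mat_entry[OF U_carrier p si a sb])
    also have "inv' \<sigma> (\<sigma> b) = b" using permutes_inverses(2)[OF s] by simp
    finally show ?thesis .
  qed
  have pin: "\<And>a. a \<in> {1..n} \<Longrightarrow> \<pi> a \<in> {1..n}" using permutes_in_image[OF p] by simp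
  have sin: "\<And>a. a \<in> {1..n} \<Longrightarrow> \<sigma> a \<in> {1..n}" using permutes_in_image[OF s] by simp
  have psub: "\<pi> ` {1..k} \<subseteq> {1..k}"
  proof
    fix x assume "x \<in> \<pi> ` {1..k}"
    then obtain a where a: "a \<in> {1..k}" "x = \<pi> a" by blast
    have an: "a \<in> {1..n}" using a k by auto
    show "x \<in> {1..k}"
    proof (rule ccontr)
      assume "x \<notin> {1..k}"
      hence gt: "\<pi> a > k" using a pin[OF an] by auto
      hence kn: "k < n" using pin[OF an] by auto
      have nn: "n \<in> {1..n}" using kn by auto
      have one: "U_mat n k $$ (\<pi> a - 1, c - 1) = 1 \<Longrightarrow> c \<in> {1..n} \<Longrightarrow> c = \<pi> a" for c
        using U_val[OF pin[OF an], of c k] gt by (auto split: if_splits)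
      have "U_mat n k $$ (\<pi> a - 1, \<sigma> a - 1) = 1"
        using rel[OF an an] U_val[OF an an, of k] a by auto
      hence e1: "\<sigma> a = \<pi> a" using one sin[OF an] by blast
      have "U_mat n k $$ (\<pi> a - 1, \<sigma> n - 1) = 1"
        using rel[OF an nn] U_val[OF an nn, of k] a kn by auto
      hence e2: "\<sigma> n = \<pi> a" using one sin[OF nn] by blast
      have "a = n" using e1 e2 permutes_inj[OF s] by (metis injD)
      thus False using a kn by auto
    qed
  qed
  have pimg: "\<pi> ` {1..k} = {1..k}" by (rule permutes_image_subset_eq[OF p _ psub]) simp
  have ssub: "\<sigma> ` {1..k} \<subseteq> {1..k}"
  proof
    fix x assume "x \<in> \<sigma> ` {1..k}"
    then obtain b where b: "b \<in> {1..k}" "x = \<sigma> b" by blast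
    have bn: "b \<in> {1..n}" using b k by auto
    show "x \<in> {1..k}"
    proof (rule ccontr)
      assume "x \<notin> {1..k}"
      hence gt: "\<sigma> b > k" using b sin[OF bn] by auto
      define a where "a = inv' \<pi> (\<sigma> b)"
      have pa: "\<pi> a = \<sigma> b" using permutes_inverses(1)[OF p] by (simp add: a_def)
      have an: "a \<in> {1..n}" using permutes_in_image[OF permutes_inv[OF p]] sin[OF bn] by (simp add: a_def)
      have "a \<notin> {1..k}"
      proof
        assume "a \<in> {1..k}"
        hence "\<pi> a \<in> {1..k}" using pimg by blast
        thus False using pa gt by auto
      qed
      hence agt: "a > k" using an by auto
      have "U_mat n k $$ (\<pi> a - 1, \<sigma> b - 1) = 1"
        using pa U_val[OF sin[OF bn] sin[OF bn], of k] gt by simp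
      moreover have "U_mat n k $$ (a - 1, b - 1) = 0"
        using U_val[OF an bn, of k] agt b by auto
      ultimately show False using rel[OF an bn] by simp
    qed
  qed
  have simg: "\<sigma> ` {1..k} = {1..k}" by (rule permutes_image_subset_eq[OF s _ ssub]) simp
  show ?thesis using pimg simg p s by (simp add: young_sub_def sym_group_carrier)
qed

lemma young_sub_subgroup: "subgroup (young_sub n k) (sym_group n)"
proof (rule group.subgroupI[OF sym_group_is_group])
  show "young_sub n k \<subseteq> carrier (sym_group n)" by (auto simp: young_sub_def)
  show "young_sub n k \<noteq> {}"
    using permutes_id by (auto simp: young_sub_def sym_group_carrier intro!: exI[of _ id])
next
  fix p assume p: "p \<in> young_sub n k"
  hence pc: "p permutes {1..n}" and im: "p ` {1..k} = {1..k}" by (auto simp: young_sub_def sym_group_carrier)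
  have "inv' p ` {1..k} = {1..k}"
    using im permutes_inj[OF pc] by (metis image_inv_f_f)
  thus "inv\<^bsub>sym_group n\<^esub> p \<in> young_sub n k"
    using p sym_group_inv_closed by (auto simp: young_sub_def)
next
  fix p q assume "p \<in> young_sub n k" "q \<in> young_sub n k"
  hence p: "p permutes {1..n}" "p ` {1..k} = {1..k}" and q: "q permutes {1..n}" "q ` {1..k} = {1..k}"
    by (auto simp: young_sub_def sym_group_carrier)
  have "(p \<circ> q) ` {1..k} = {1..k}" using p q by (metis image_comp)
  moreover have "p \<circ> q permutes {1..n}" using p q permutes_compose by blast
  ultimately show "p \<otimes>\<^bsub>sym_group n\<^esub> q \<in> young_sub n k"
    by (simp add: young_sub_def sym_group_mult sym_group_carrier)
qed


lemma dim_perm_mat[simp]: "dim_row (perm_mat n p) = n" "dim_col (perm_mat n p) = n"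
  by (simp_all add: perm_mat_def)

lemma sym_inv: "p \<in> carrier (sym_group n) \<Longrightarrow> inv\<^bsub>sym_group n\<^esub> p = inv' p"
  by simp

lemma SnSn_group: "group (SnSn n)"
  unfolding SnSn_def by (rule DirProd_group[OF sym_group_is_group sym_group_is_group])

lemma act_one: "A \<in> carrier_mat n n \<Longrightarrow> two_sided_act n \<one>\<^bsub>SnSn n\<^esub> A = A"
proof -
  assume A: "A \<in> carrier_mat n n"
  have "inv\<^bsub>sym_group n\<^esub> id = id"
    using sym_group_inv_equality[of id n] permutes_id[of "{1..n}"] by (simp add: sym_group_carrier)
  thus ?thesis using A by (simp add: two_sided_act_def SnSn_def sym_group_one perm_mat_id)
qed

lemma assoc5:
  assumes a: "a \<in> carrier_mat n n" and b: "b \<in> carrier_mat n n" and c: "c \<in> carrier_mat n n"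
    and d: "d \<in> carrier_mat n n" and e: "e \<in> carrier_mat n n"
  shows "(a * b) * c * (d * e) = a * (b * c * d) * e"
proof -
  have bc: "b * c \<in> carrier_mat n n" using b c by (rule mult_carrier_mat)
  have bcd: "b * c * d \<in> carrier_mat n n" using bc d by (rule mult_carrier_mat)
  have de: "d * e \<in> carrier_mat n n" using d e by (rule mult_carrier_mat)
  have "(a * b) * c * (d * e) = a * (b * c) * (d * e)" using assoc_mult_mat[OF a b c] by simp
  also have "\<dots> = a * (b * c * (d * e))" using assoc_mult_mat[OF a bc de] .
  also have "b * c * (d * e) = b * c * d * e" using assoc_mult_mat[OF bc d e] by simp
  also have "a * (b * c * d * e) = a * (b * c * d) * e" using assoc_mult_mat[OF a bcd e] by simp
  finally show ?thesis .
qed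

lemma act_mult:
  assumes g: "g \<in> carrier (SnSn n)" and h: "h \<in> carrier (SnSn n)" and A: "A \<in> carrier_mat n n"
  shows "two_sided_act n (g \<otimes>\<^bsub>SnSn n\<^esub> h) A = two_sided_act n g (two_sided_act n h A)"
proof -
  obtain g1 g2 where gg: "g = (g1, g2)" by (cases g)
  obtain h1 h2 where hh: "h = (h1, h2)" by (cases h)
  have p: "g1 permutes {1..n}" "g2 permutes {1..n}" "h1 permutes {1..n}" "h2 permutes {1..n}"
    using g h gg hh by (auto simp: SnSn_def sym_group_carrier)
  have pi: "inv' g2 permutes {1..n}" "inv' h2 permutes {1..n}" using p permutes_inv by blast+
  have gh: "g \<otimes>\<^bsub>SnSn n\<^esub> h = (g1 \<circ> h1, g2 \<circ> h2)" by (simp add: gg hh SnSn_def sym_group_mult)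
  have c2: "g2 \<circ> h2 permutes {1..n}" using p permutes_compose by blast
  have inv2: "inv' (g2 \<circ> h2) = inv' h2 \<circ> inv' g2"
    using p permutes_bij o_inv_distrib by blast
  have "two_sided_act n (g \<otimes>\<^bsub>SnSn n\<^esub> h) A =
      perm_mat n (g1 \<circ> h1) * A * perm_mat n (inv' h2 \<circ> inv' g2)"
    using c2 inv2 by (simp add: gh two_sided_act_def sym_group_carrier)
  also have "\<dots> = (perm_mat n g1 * perm_mat n h1) * A * (perm_mat n (inv' h2) * perm_mat n (inv' g2))"
    using p pi by (simp add: perm_mat_mult)
  also have "\<dots> = perm_mat n g1 * (perm_mat n h1 * A * perm_mat n (inv' h2)) * perm_mat n (inv' g2)"
  proof -
    have c: "perm_mat n g1 \<in> carrier_mat n n" "perm_mat n h1 \<in> carrier_mat n n"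
      "perm_mat n (inv' h2) \<in> carrier_mat n n" "perm_mat n (inv' g2) \<in> carrier_mat n n" by auto
    show ?thesis by (rule assoc5[OF c(1,2) A c(3,4)])
  qed
  also have "\<dots> = two_sided_act n g (two_sided_act n h A)"
    using p by (simp add: gg hh two_sided_act_def sym_group_carrier)
  finally show ?thesis .
qed

lemma act_cl: "two_sided_act n g A \<in> carrier_mat n n"
  unfolding two_sided_act_def carrier_mat_def by simp

lemma orbit_eq:
  assumes sub: "subgroup K (sym_group n)"
  shows "{perm_mat n \<pi> * U_mat n k * perm_mat n \<sigma> | \<pi> \<sigma>. \<pi> \<in> K \<and> \<sigma> \<in> K}
       = (\<lambda>g. two_sided_act n g (U_mat n k)) ` (K \<times> K)"
proof -
  have Kc: "K \<subseteq> carrier (sym_group n)" using sub subgroup.subset by blast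
  have invK: "inv' p \<in> K" if "p \<in> K" for p
  proof -
    have "p \<in> carrier (sym_group n)" using Kc that by blast
    thus ?thesis using subgroup.m_inv_closed[OF sub that] sym_group_inv_equality[of p n] by simp
  qed
  have ii: "inv' (inv' p) = p" if "p \<in> K" for p
    using that Kc by (meson inv_inv_eq permutes_bij subsetD sym_group_carrier)
  show ?thesis
  proof
    show "{perm_mat n \<pi> * U_mat n k * perm_mat n \<sigma> | \<pi> \<sigma>. \<pi> \<in> K \<and> \<sigma> \<in> K}
       \<subseteq> (\<lambda>g. two_sided_act n g (U_mat n k)) ` (K \<times> K)"
    proof
      fix x assume "x \<in> {perm_mat n \<pi> * U_mat n k * perm_mat n \<sigma> | \<pi> \<sigma>. \<pi> \<in> K \<and> \<sigma> \<in> K}"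
      then obtain \<pi> \<sigma> where x: "x = perm_mat n \<pi> * U_mat n k * perm_mat n \<sigma>" "\<pi> \<in> K" "\<sigma> \<in> K" by blast
      have "x = two_sided_act n (\<pi>, inv' \<sigma>) (U_mat n k)"
        using x invK[OF x(3)] Kc ii[OF x(3)] by (auto simp: two_sided_act_def)
      thus "x \<in> (\<lambda>g. two_sided_act n g (U_mat n k)) ` (K \<times> K)" using x invK by blast
    qed
  next
    show "(\<lambda>g. two_sided_act n g (U_mat n k)) ` (K \<times> K) \<subseteq>
       {perm_mat n \<pi> * U_mat n k * perm_mat n \<sigma> | \<pi> \<sigma>. \<pi> \<in> K \<and> \<sigma> \<in> K}"
    proof
      fix x assume "x \<in> (\<lambda>g. two_sided_act n g (U_mat n k)) ` (K \<times> K)"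
      then obtain \<pi> \<sigma> where x: "x = two_sided_act n (\<pi>, \<sigma>) (U_mat n k)" "\<pi> \<in> K" "\<sigma> \<in> K" by blast
      have "x = perm_mat n \<pi> * U_mat n k * perm_mat n (inv' \<sigma>)"
        using x Kc by (auto simp: two_sided_act_def)
      thus "x \<in> {perm_mat n \<pi> * U_mat n k * perm_mat n \<sigma> | \<pi> \<sigma>. \<pi> \<in> K \<and> \<sigma> \<in> K}"
        using x invK by blast
    qed
  qed
qed

lemma sym_subgroup_self: "subgroup (carrier (sym_group n)) (sym_group n)"
  by (rule group.subgroup_self[OF sym_group_is_group])

theorem mainTheorem12:
  fixes n k :: nat
  assumes "k \<le> n"
  shows "rep_iso (SnSn n) (alpha_rep n k)
           (induced_rep (SnSn n) (young_sub n k \<times> young_sub n k) (omega_rep n k))"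
  unfolding alpha_rep_def omega_rep_def
proof (rule induced_perm_iso[where Y = "carrier_mat n n :: int mat set" and u = "U_mat n k"])
  show "group (SnSn n)" by (rule SnSn_group)
  have fs: "finite (carrier (sym_group n))"
    unfolding sym_group_def using finite_permutations[of "{1..n}"] by simp
  show "finite (carrier (SnSn n))" by (simp add: SnSn_def fs)
  show "subgroup (young_sub n k \<times> young_sub n k) (SnSn n)"
    unfolding SnSn_def
    by (rule DirProd_subgroups[OF sym_group_is_group young_sub_subgroup sym_group_is_group young_sub_subgroup])
  show "\<And>x. x \<in> carrier_mat n n \<Longrightarrow> two_sided_act n \<one>\<^bsub>SnSn n\<^esub> x = x" by (rule act_one)
  show "\<And>g h x. g \<in> carrier (SnSn n) \<Longrightarrow> h \<in> carrier (SnSn n) \<Longrightarrow> x \<in> carrier_mat n n \<Longrightarrow>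
        two_sided_act n (g \<otimes>\<^bsub>SnSn n\<^esub> h) x = two_sided_act n g (two_sided_act n h x)"
    by (rule act_mult)
  show "\<And>g x. g \<in> carrier (SnSn n) \<Longrightarrow> x \<in> carrier_mat n n \<Longrightarrow> two_sided_act n g x \<in> carrier_mat n n"
    by (rule act_cl)
  show "U_mat n k \<in> carrier_mat n n" by simp
  show "\<And>g. g \<in> carrier (SnSn n) \<Longrightarrow> two_sided_act n g (U_mat n k) = U_mat n k \<Longrightarrow>
          g \<in> young_sub n k \<times> young_sub n k"
  proof -
    fix g assume g: "g \<in> carrier (SnSn n)" and e: "two_sided_act n g (U_mat n k) = U_mat n k"
    obtain p s where gg: "g = (p, s)" by (cases g)
    have ps: "p permutes {1..n}" "s permutes {1..n}" using g gg by (auto simp: SnSn_def sym_group_carrier)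
    have "perm_mat n p * U_mat n k * perm_mat n (inv' s) = U_mat n k"
      using e ps by (simp add: gg two_sided_act_def sym_group_carrier)
    thus "g \<in> young_sub n k \<times> young_sub n k" using stab_young[OF assms ps] gg by simp
  qed
  show "H_set n k = (\<lambda>g. two_sided_act n g (U_mat n k)) ` carrier (SnSn n)"
  proof -
    have "H_set n k = (\<lambda>g. two_sided_act n g (U_mat n k)) ` (carrier (sym_group n) \<times> carrier (sym_group n))"
      unfolding H_set_def by (rule orbit_eq[OF sym_subgroup_self])
    thus ?thesis by (simp add: SnSn_def)
  qed
  show "W_set n k = (\<lambda>g. two_sided_act n g (U_mat n k)) ` (young_sub n k \<times> young_sub n k)"
    unfolding W_set_def by (rule orbit_eq[OF young_sub_subgroup])
qed

end
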